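(* Let $(X,T)$ be random variables with $X$ taking values in a countable set $\mathcal{X}$ and $T\in\{0,1\}$, with joint distribution $P$. Let $Q(T=1\mid X)$ be a propensity score model, i.e. a function $x\mapsto Q(T=1\mid X=x)\in(0,1)$. Suppose $Q$ is not calibrated, in the sense that there exists $q'\in(0,1)$ with $P\big(Q(T=1\mid X)=q'\big)>0$ and $P\big(T=1 \mid Q(T=1\mid X)=q'\big)\neq q'$. Then there exists an outcome function $g:\mathcal{X}\times\{0,1\}\to\mathbb{R}$ such that, if the outcome is $Y=g(X,T)$ (so that the potential outcomes are $Y(t)=g(X,t)$ and the true average treatment effect is $\tau=\mathbb{E}[g(X,1)-g(X,0)]$), the IPTW estimator computed from $n$ i.i.d. samples $(X^{(i)},T^{(i)},Y^{(i)})$, $$\hat\tau_n=\frac1n\sum_{i=1}^n\left(\frac{T^{(i)}Y^{(i)}}{Q(T=1\mid X^{(i)})}-\frac{(1-T^{(i)})Y^{(i)}}{1-Q(T=1\mid X^{(i)})}\right),$$ satisfies $\lim_{n\to\infty}\Pr(\hat\tau_n=\tau)=0$.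
   Context: Setting: observational data of i.i.d. units with features $X$, binary treatment $T$ and scalar outcome $Y$. A propensity score model $Q(T=1\mid X)$ is calibrated if $P(T=1\mid Q(T=1\mid X)=q)=q$ for all $q$; the IPTW (inverse probability of treatment weighting) estimator is as displayed in the claim. *)

theory Defs
  imports "HOL-Probability.Probability"
begin

definition iptw :: "('a \<Rightarrow> real) \<Rightarrow> ('a \<Rightarrow> bool \<Rightarrow> real) \<Rightarrow> nat \<Rightarrow> (nat \<Rightarrow> 'a \<times> bool) \<Rightarrow> real" where
  "iptw Q g n s = (1 / real n) * (\<Sum>i<n.
      (of_bool (snd (s i)) * g (fst (s i)) (snd (s i))) / Q (fst (s i))
      - ((1 - of_bool (snd (s i))) * g (fst (s i)) (snd (s i))) / (1 - Q (fst (s i))))"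

definition ate :: "('a \<times> bool) pmf \<Rightarrow> ('a \<Rightarrow> bool \<Rightarrow> real) \<Rightarrow> real" where
  "ate P g = measure_pmf.expectation P (\<lambda>(x, t). g x True - g x False)"

end

theory Submission
  imports Defs
begin

lemma map_pmf_bern:
  fixes P :: "'b pmf"
  shows "map_pmf E P = bernoulli_pmf (measure_pmf.prob P {z. E z})"
proof (rule pmf_eqI)
  fix b
  have m0: "0 \<le> measure_pmf.prob P {z. E z}" "measure_pmf.prob P {z. E z} \<le> 1" by auto
  show "pmf (map_pmf E P) b = pmf (bernoulli_pmf (measure_pmf.prob P {z. E z})) b"
  proof (cases b)
    case True
    then show ?thesis using m0 by (simp add: pmf_map vimage_def)
  next
    case False
    have "measure_pmf.prob P {z. \<not> E z} = 1 - measure_pmf.prob P {z. E z}"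
      using measure_pmf.prob_compl[of "{z. E z}" P] by (simp add: Compl_eq_Diff_UNIV[symmetric] Collect_neg_eq)
    then show ?thesis using m0 False by (simp add: pmf_map vimage_def)
  qed
qed

lemma count_binomial:
  fixes P :: "'b pmf"
  shows "map_pmf (\<lambda>s. card {i\<in>{..<n}. E (s i)}) (Pi_pmf {..<n} d (\<lambda>_. P))
       = binomial_pmf n (measure_pmf.prob P {z. E z})"
proof -
  let ?m = "measure_pmf.prob P {z. E z}"
  have "binomial_pmf n ?m = map_pmf (\<lambda>f. card {x\<in>{..<n}. f x}) (Pi_pmf {..<n} (E d) (\<lambda>_. bernoulli_pmf ?m))"
    by (rule binomial_pmf_altdef') auto
  also have "Pi_pmf {..<n} (E d) (\<lambda>_. bernoulli_pmf ?m) = Pi_pmf {..<n} (E d) (\<lambda>_. map_pmf E P)"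
    by (simp add: map_pmf_bern)
  also have "\<dots> = map_pmf (\<lambda>h. E \<circ> h) (Pi_pmf {..<n} d (\<lambda>_. P))"
    by (rule Pi_pmf_map) auto
  finally show ?thesis by (simp add: pmf.map_comp o_def)
qed

theorem mainTheorem1:
  fixes P :: "('a :: countable \<times> bool) pmf" and Q :: "'a \<Rightarrow> real"
  assumes Q_range: "\<And>x. 0 < Q x \<and> Q x < 1"
    and not_calibrated: "\<exists>q'. 0 < q' \<and> q' < 1
        \<and> measure_pmf.prob P {(x, t). Q x = q'} > 0
        \<and> measure_pmf.prob P {(x, t). Q x = q' \<and> t} / measure_pmf.prob P {(x, t). Q x = q'} \<noteq> q'"
  shows "\<exists>g :: 'a \<Rightarrow> bool \<Rightarrow> real.
           integrable (measure_pmf P) (\<lambda>(x, t). g x True - g x False)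
         \<and> (\<lambda>n. measure_pmf.prob (Pi_pmf {..<n} undefined (\<lambda>_. P))
                   {s. iptw Q g n s = ate P g}) \<longlonglongrightarrow> 0"
proof -
  obtain q' where q0: "0 < q'" and q1: "q' < 1"
    and pp: "measure_pmf.prob P {(x, t). Q x = q'} > 0"
    and nc: "measure_pmf.prob P {(x, t). Q x = q' \<and> t} / measure_pmf.prob P {(x, t). Q x = q'} \<noteq> q'"
    using not_calibrated by blast
  define p where "p = measure_pmf.prob P {(x, t). Q x = q'}"
  define E where "E = (\<lambda>(x::'a, t::bool). Q x = q' \<and> t)"
  define m where "m = measure_pmf.prob P {z. E z}"
  have mE: "m = measure_pmf.prob P {(x, t). Q x = q' \<and> t}"
    unfolding m_def E_def by (simp add: case_prod_unfold)
  have mne: "m \<noteq> q' * p" using nc pp unfolding mE p_def by (auto simp: field_simps)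
  define \<epsilon> where "\<epsilon> = \<bar>q' * p - m\<bar>"
  have eps: "\<epsilon> > 0" using mne unfolding \<epsilon>_def by auto
  define g :: "'a \<Rightarrow> bool \<Rightarrow> real" where "g = (\<lambda>x t. if Q x = q' \<and> t then q' else 0)"
  have diff: "(\<lambda>(x, t). g x True - g x False) = (\<lambda>z. q' * indicator {(x, t). Q x = q'} z)"
    by (auto simp: g_def fun_eq_iff indicator_def)
  have int: "integrable (measure_pmf P) (\<lambda>(x, t). g x True - g x False)"
    unfolding diff by (intro integrable_mult_right measure_pmf.integrable_const_bound[where B=1]) (auto simp: indicator_def)
  have ate: "ate P g = q' * p"
    unfolding ate_def diff p_def by simp
  have summ: "of_bool (snd z) * g (fst z) (snd z) / Q (fst z)
      - (1 - of_bool (snd z)) * g (fst z) (snd z) / (1 - Q (fst z)) = of_bool (E z)" for z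
    using q0 by (cases z) (auto simp: g_def E_def)
  have iptw: "iptw Q g n s = real (card {i\<in>{..<n}. E (s i)}) / real n" for n s
  proof -
    have "(\<Sum>i<n. of_bool (E (s i)) :: real) = real (card {i\<in>{..<n}. E (s i)})"
      by (simp add: of_bool_def sum.If_cases Int_def conj_commute)
    then show ?thesis unfolding iptw_def summ by simp
  qed
  have bound: "measure_pmf.prob (Pi_pmf {..<n} undefined (\<lambda>_. P)) {s. iptw Q g n s = ate P g}
      \<le> 2 * exp (-2 * real n * \<epsilon>\<^sup>2)" if n: "n > 0" for n
  proof -
    interpret binomial_distribution n m by unfold_locales (auto simp: m_def)
    have "measure_pmf.prob (Pi_pmf {..<n} undefined (\<lambda>_. P)) {s. iptw Q g n s = ate P g}
        \<le> measure_pmf.prob (Pi_pmf {..<n} undefined (\<lambda>_. P))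
            ((\<lambda>s. card {i\<in>{..<n}. E (s i)}) -` {k. \<bar>real k / real n - m\<bar> \<ge> \<epsilon>})"
      by (rule measure_pmf.finite_measure_mono) (auto simp: iptw ate \<epsilon>_def)
    also have "\<dots> = measure_pmf.prob (binomial_pmf n m) {k. \<bar>real k / real n - m\<bar> \<ge> \<epsilon>}"
      unfolding m_def count_binomial[symmetric, where E=E and n=n and d=undefined and P=P] measure_map_pmf by (rule refl)
    also have "\<dots> \<le> 2 * exp (-2 * real n * \<epsilon>\<^sup>2)"
      using prob_abs_ge'[OF n, of \<epsilon>] eps by (simp add: mult_ac)
    finally show ?thesis .
  qed
  have lim: "(\<lambda>n. 2 * exp (-2 * real n * \<epsilon>\<^sup>2)) \<longlonglongrightarrow> 0"
    using eps by real_asymp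
  show ?thesis
  proof (intro exI conjI)
    show "integrable (measure_pmf P) (\<lambda>(x, t). g x True - g x False)" by (rule int)
    show "(\<lambda>n. measure_pmf.prob (Pi_pmf {..<n} undefined (\<lambda>_. P))
                   {s. iptw Q g n s = ate P g}) \<longlonglongrightarrow> 0"
    proof (rule tendsto_sandwich[OF _ _ tendsto_const lim])
      show "\<forall>\<^sub>F n in sequentially. 0 \<le> measure_pmf.prob (Pi_pmf {..<n} undefined (\<lambda>_. P))
                   {s. iptw Q g n s = ate P g}" by simp
      show "\<forall>\<^sub>F n in sequentially. measure_pmf.prob (Pi_pmf {..<n} undefined (\<lambda>_. P))
                   {s. iptw Q g n s = ate P g} \<le> 2 * exp (-2 * real n * \<epsilon>\<^sup>2)"
        using eventually_gt_at_top[of 0] by eventually_elim (rule bound)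
    qed
  qed
qed

end
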